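(* Suppose that the constant function $1$ belongs to $\mathcal F^{(1)}_\ell(p)$, that $-\Delta^{-\ell}\mathcal T_p^{\ell}1(x)>0$ for $\mu$-almost all $x\in\mathcal S(p)$, and that $\Delta^{-\ell}(\mathcal T_p^\ell 1)\in L^1(\mu)$. Then for every $x'\in\mathcal S(p)$ the function $$p^\star_{x'}(x)=\frac{K_p^\ell(x,x')}{p(x')}\big(-\Delta^{-\ell}\mathcal T_p^{\ell}1(x)\big)$$ is a probability density on $\mathcal S(p)$ with respect to $\mu$.
   Context: Let $\mu$ be either the counting measure on $\mathcal X=\mathbb Z$ or Lebesgue measure on $\mathcal X=\mathbb R$. Let $X$ be a random variable with density $p$ with respect to $\mu$ and support $\mathcal S(p)=\{x: p(x)>0\}$. Standing assumption: in the counting case $\mathcal S(p)=[a,b]\cap\mathbb Z$ for some $a<b\in\mathbb Z\cup\{\pm\infty\}$; in the Lebesgue case $\mathcal S(p)$ has interior $(a,b)$ and closure $[a,b]$ for some $a<b\in\mathbb R\cup\{\pm\infty\}$; $p$ is not a point mass. Fix $\ell\in\{-1,0,1\}$; $\ell=0$ is used with Lebesgue measure, $\ell=\pm1$ with counting measure. Define $\Delta^0f=f'$ (weak derivative) and, for $\ell=\pm1$, $\Delta^{\ell}f(x)=\frac1\ell(f(x+\ell)-f(x))$; $\mathrm{dom}(\Delta^\ell)$ is the set of absolutely continuous functions if $\ell=0$ and all functions $\mathbb Z\to\mathbb R$ if $\ell=\pm1$; $\mathrm{dom}(p,\Delta^\ell)=\{f: fp\in\mathrm{dom}(\Delta^\ell)\}$.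 The canonical Stein operator is $\mathcal T_p^\ell f=\Delta^\ell(fp)/p$ on $\mathcal S(p)$ and $0$ outside; in particular $\mathcal T_p^\ell 1=\Delta^\ell p/p$. The canonical Stein class $\mathcal F^{(1)}_\ell(p)$ is the set of $f\in\mathrm{dom}(p,\Delta^\ell)$ with $\Delta^\ell(fp)\mathbb I_{\mathcal S(p)}\in L^1(\mu)$ and $\int_{\mathcal S(p)}\Delta^\ell(fp)\,d\mu=0$. Set $a_\ell=\mathbb I[\ell=1]$, $\chi^{\ell}(x,y)=\mathbb I[x\le y-a_\ell]$, and $K_p^{\ell}(x,x')=\mathbb E[\chi^\ell(X,x)\chi^\ell(X,x')]-\mathbb E[\chi^\ell(X,x)]\mathbb E[\chi^\ell(X,x')]$ for $x,x'\in\mathcal S(p)$. *)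

theory Defs
  imports "HOL-Analysis.Analysis"
begin

definition supp :: "('a \<Rightarrow> real) \<Rightarrow> 'a set" where
  "supp p = {x. 0 < p x}"

text \<open>Lebesgue case, Delta^0 = weak derivative: f is (locally) absolutely continuous on the
  interval I with (a.e.) derivative g, i.e. g is integrable on every compact subinterval of I
  and f y - f x is the integral of g over [x,y].\<close>
definition has_weak_deriv_on :: "(real \<Rightarrow> real) \<Rightarrow> (real \<Rightarrow> real) \<Rightarrow> real set \<Rightarrow> bool" where
  "has_weak_deriv_on f g I \<longleftrightarrow>
     (\<forall>x y. x \<in> I \<longrightarrow> y \<in> I \<longrightarrow> x \<le> y \<longrightarrow>
        set_integrable lborel {x..y} g \<and> f y - f x = (LINT t:{x..y}|lborel. g t))"

text \<open>Counting case, l = 1 or l = -1: forward / backward difference.\<close>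
definition delta :: "int \<Rightarrow> (int \<Rightarrow> real) \<Rightarrow> int \<Rightarrow> real" where
  "delta l f x = (f (x + l) - f x) / real_of_int l"

definition chi :: "'a::ordered_ab_group_add \<Rightarrow> 'a \<Rightarrow> 'a \<Rightarrow> real" where
  "chi a x y = (if x \<le> y - a then 1 else 0)"

text \<open>K_p^l(x,x') = Cov(chi(X,x), chi(X,x')) for X with density p w.r.t. the measure M
  (expectations written as integrals against p dM).\<close>
definition covK :: "'a::ordered_ab_group_add measure \<Rightarrow> ('a \<Rightarrow> real) \<Rightarrow> 'a \<Rightarrow> 'a \<Rightarrow> 'a \<Rightarrow> real" where
  "covK M p a x x' =
     (LINT t|M. chi a t x * chi a t x' * p t)
     - (LINT t|M. chi a t x * p t) * (LINT t|M. chi a t x' * p t)"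

definition prob_density_on :: "'a measure \<Rightarrow> 'a set \<Rightarrow> ('a \<Rightarrow> real) \<Rightarrow> bool" where
  "prob_density_on M S f \<longleftrightarrow>
     (AE x in M. x \<in> S \<longrightarrow> 0 \<le> f x) \<and> set_integrable M S f \<and> (LINT x:S|M. f x) = 1"

end

theory Submission
  imports Defs
begin


lemma fubini_swap:
  fixes M :: "'a measure" and W p :: "'a \<Rightarrow> real"
  assumes sf: "sigma_finite_measure M"
    and W: "integrable M W" and p: "integrable M p"
    and R: "Measurable.pred (M \<Otimes>\<^sub>M M) (\<lambda>z. R (fst z) (snd z))"
  shows "(\<integral>x. W x * (\<integral>t. (if R x t then p t else 0) \<partial>M) \<partial>M)
       = (\<integral>t. p t * (\<integral>x. (if R x t then W x else 0) \<partial>M) \<partial>M)"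
    "integrable M (\<lambda>x. W x * (\<integral>t. (if R x t then p t else 0) \<partial>M))"
    "integrable M (\<lambda>t. p t * (\<integral>x. (if R x t then W x else 0) \<partial>M))"
proof -
  interpret pair_sigma_finite M M using sf by (simp add: pair_sigma_finite_def)
  have [measurable]: "W \<in> borel_measurable M" "p \<in> borel_measurable M" using W p by auto
  have gint: "integrable (M \<Otimes>\<^sub>M M) (\<lambda>z. \<bar>W (fst z)\<bar> * \<bar>p (snd z)\<bar>)"
  proof (rule Fubini_integrable)
    show "(\<lambda>z. \<bar>W (fst z)\<bar> * \<bar>p (snd z)\<bar>) \<in> borel_measurable (M \<Otimes>\<^sub>M M)" by measurable
    show "integrable M (\<lambda>x. \<integral>y. norm (\<bar>W (fst (x, y))\<bar> * \<bar>p (snd (x, y))\<bar>) \<partial>M)"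
      using W by (simp add: abs_mult)
    show "AE x in M. integrable M (\<lambda>y. \<bar>W (fst (x, y))\<bar> * \<bar>p (snd (x, y))\<bar>)"
      using p by simp
  qed
  have fint: "integrable (M \<Otimes>\<^sub>M M) (case_prod (\<lambda>x t. if R x t then W x * p t else 0))"
  proof (rule Bochner_Integration.integrable_bound[OF gint])
    show "case_prod (\<lambda>x t. if R x t then W x * p t else 0) \<in> borel_measurable (M \<Otimes>\<^sub>M M)"
      using R unfolding case_prod_beta by measurable
    show "AE z in M \<Otimes>\<^sub>M M. norm (case_prod (\<lambda>x t. if R x t then W x * p t else 0) z) \<le> norm (\<bar>W (fst z)\<bar> * \<bar>p (snd z)\<bar>)"
      by (auto simp: abs_mult)
  qed
  have e1: "\<And>x. (\<integral>t. (if R x t then W x * p t else 0) \<partial>M) = W x * (\<integral>t. (if R x t then p t else 0) \<partial>M)"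
  proof -
    fix x have "(\<lambda>t. if R x t then W x * p t else 0) = (\<lambda>t. W x * (if R x t then p t else 0))" by auto
    then show "?thesis x" by simp
  qed
  have e2: "\<And>t. (\<integral>x. (if R x t then W x * p t else 0) \<partial>M) = p t * (\<integral>x. (if R x t then W x else 0) \<partial>M)"
  proof -
    fix t have "(\<lambda>x. if R x t then W x * p t else 0) = (\<lambda>x. p t * (if R x t then W x else 0))" by auto
    then show "?thesis t" by simp
  qed
  have "(\<integral>t. (\<integral>x. (if R x t then W x * p t else 0) \<partial>M) \<partial>M) = (\<integral>x. (\<integral>t. (if R x t then W x * p t else 0) \<partial>M) \<partial>M)"
    by (rule Fubini_integral[OF fint])
  then show "(\<integral>x. W x * (\<integral>t. (if R x t then p t else 0) \<partial>M) \<partial>M)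
       = (\<integral>t. p t * (\<integral>x. (if R x t then W x else 0) \<partial>M) \<partial>M)" by (simp add: e1 e2)
  show "integrable M (\<lambda>x. W x * (\<integral>t. (if R x t then p t else 0) \<partial>M))"
    using integrable_fst'[OF fint] by (simp add: e1)
  have "integrable (M \<Otimes>\<^sub>M M) (\<lambda>(x,y). (case_prod (\<lambda>x t. if R x t then W x * p t else 0)) (y,x))"
    by (rule integrable_product_swap[OF fint])
  from integrable_fst'[OF this] show "integrable M (\<lambda>t. p t * (\<integral>x. (if R x t then W x else 0) \<partial>M))"
    by (simp add: e2)
qed

definition Gf :: "'a::ordered_ab_group_add measure \<Rightarrow> ('a \<Rightarrow> real) \<Rightarrow> 'a \<Rightarrow> 'a \<Rightarrow> real" where
  "Gf M p a y = (LINT t|M. chi a t y * p t)"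

lemma chi_int:
  fixes M :: "'a::ordered_ab_group_add measure"
  assumes p: "integrable M p" and ch: "\<And>y. (\<lambda>t. chi a t y) \<in> borel_measurable M"
  shows "integrable M (\<lambda>t. chi a t y * p t)"
proof -
  have m: "(\<lambda>t. chi a t y * p t) \<in> borel_measurable M"
    using ch[of y] borel_measurable_integrable[OF p] by (rule borel_measurable_times)
  show ?thesis
    by (rule Bochner_Integration.integrable_bound[OF p m]) (auto simp: chi_def)
qed

lemma Gf_bounds:
  fixes M :: "'a::ordered_ab_group_add measure"
  assumes p: "integrable M p" "\<And>x. 0 \<le> p x" "(LINT x|M. p x) = 1"
    and ch: "\<And>y. (\<lambda>t. chi a t y) \<in> borel_measurable M"
  shows "0 \<le> Gf M p a y" "Gf M p a y \<le> 1"
proof -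
  show "0 \<le> Gf M p a y" unfolding Gf_def using p by (auto intro!: integral_nonneg_AE simp: chi_def)
  have "Gf M p a y \<le> (LINT x|M. p x)" unfolding Gf_def
    using p chi_int[OF p(1) ch] by (intro integral_mono) (auto simp: chi_def)
  then show "Gf M p a y \<le> 1" using p by simp
qed

lemma covK_dec:
  fixes M :: "'a::{linordered_ab_group_add} measure"
  assumes p: "integrable M p" "(LINT x|M. p x) = 1"
    and ch: "\<And>y. (\<lambda>t. chi a t y) \<in> borel_measurable M"
  shows "covK M p a x c = (1 - Gf M p a c) * (LINT t|M. (if x \<le> c \<and> t \<le> x - a then p t else 0))
        + Gf M p a c * (LINT t|M. (if c < x \<and> \<not> t \<le> x - a then p t else 0))"
proof (cases "x \<le> c")
  case True
  have h1: "(\<lambda>t. chi a t x * chi a t c * p t) = (\<lambda>t. chi a t x * p t)"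
  proof (rule ext)
    fix t have "t \<le> x - a \<Longrightarrow> t \<le> c - a" using True by (meson diff_right_mono order_trans)
    then show "chi a t x * chi a t c * p t = chi a t x * p t" by (auto simp: chi_def)
  qed
  have h2: "(\<lambda>t. (if x \<le> c \<and> t \<le> x - a then p t else 0)) = (\<lambda>t. chi a t x * p t)"
    using True by (auto simp: chi_def)
  have h3: "(\<lambda>t. (if c < x \<and> \<not> t \<le> x - a then p t else 0)) = (\<lambda>t. 0)"
    using True by (intro ext) (metis leD)
  show ?thesis unfolding covK_def h1 h2 h3 Gf_def by (simp add: algebra_simps)
next
  case False
  have h1: "(\<lambda>t. chi a t x * chi a t c * p t) = (\<lambda>t. chi a t c * p t)"
  proof (rule ext)
    fix t have "t \<le> c - a \<Longrightarrow> t \<le> x - a" using False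
      by (meson diff_right_mono order_trans nle_le)
    then show "chi a t x * chi a t c * p t = chi a t c * p t" by (auto simp: chi_def)
  qed
  have h2: "(\<lambda>t. (if c < x \<and> \<not> t \<le> x - a then p t else 0)) = (\<lambda>t. p t - chi a t x * p t)"
    using False by (auto simp: chi_def)
  have h3: "(\<lambda>t. (if x \<le> c \<and> t \<le> x - a then p t else 0)) = (\<lambda>t. 0)"
    using False by auto
  have h4: "(LINT t|M. p t - chi a t x * p t) = 1 - Gf M p a x"
    unfolding Gf_def using p chi_int[OF p(1) ch] by simp
  show ?thesis unfolding covK_def h1 h2 h3 h4 unfolding Gf_def by (simp add: algebra_simps)
qed

lemma covK_nonneg:
  fixes M :: "'a::{linordered_ab_group_add} measure"
  assumes p: "integrable M p" "\<And>x. 0 \<le> p x" "(LINT x|M. p x) = 1"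
    and ch: "\<And>y. (\<lambda>t. chi a t y) \<in> borel_measurable M"
  shows "0 \<le> covK M p a x c"
proof -
  have i: "0 \<le> (LINT t|M. (if P t then p t else 0))" for P
    using p by (intro integral_nonneg_AE) auto
  show ?thesis unfolding covK_dec[OF p(1,3) ch]
    using Gf_bounds[OF p ch, of c] i by (intro add_nonneg_nonneg mult_nonneg_nonneg) auto
qed

lemma main_generic:
  fixes M :: "'a::{linordered_ab_group_add} measure"
  assumes sf: "sigma_finite_measure M"
    and p: "integrable M p" "(LINT x|M. p x) = 1"
    and ch: "\<And>y. (\<lambda>t. chi a t y) \<in> borel_measurable M"
    and W: "integrable M W"
    and R1: "Measurable.pred (M \<Otimes>\<^sub>M M) (\<lambda>z. fst z \<le> c \<and> snd z \<le> fst z - a)"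
    and R2: "Measurable.pred (M \<Otimes>\<^sub>M M) (\<lambda>z. c < fst z \<and> \<not> snd z \<le> fst z - a)"
    and E1: "(LINT t|M. p t * (LINT x|M. (if x \<le> c \<and> t \<le> x - a then W x else 0))) = A - r * Gf M p a c"
    and E2: "(LINT t|M. p t * (LINT x|M. (if c < x \<and> \<not> t \<le> x - a then W x else 0))) = r * (1 - Gf M p a c) + A"
  shows "integrable M (\<lambda>x. W x * covK M p a x c)" "(LINT x|M. W x * covK M p a x c) = A"
proof -
  note f1 = fubini_swap[OF sf W p(1) R1, simplified]
  note f2 = fubini_swap[OF sf W p(1) R2, simplified]
  let ?G = "Gf M p a c"
  have eq: "(\<lambda>x. W x * covK M p a x c) = (\<lambda>x. (1 - ?G) * (W x * (LINT t|M. (if x \<le> c \<and> t \<le> x - a then p t else 0)))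
       + ?G * (W x * (LINT t|M. (if c < x \<and> \<not> t \<le> x - a then p t else 0))))"
    by (rule ext, subst covK_dec[OF p ch]) (simp add: algebra_simps)
  show "integrable M (\<lambda>x. W x * covK M p a x c)" unfolding eq using f1(2) f2(2) by simp
  have "(LINT x|M. W x * covK M p a x c) = (1 - ?G) * (A - r * ?G) + ?G * (r * (1 - ?G) + A)"
    unfolding eq using f1 f2 E1 E2 by simp
  also have "\<dots> = A" by (simp add: algebra_simps)
  finally show "(LINT x|M. W x * covK M p a x c) = A" .
qed




abbreviation CS :: "int measure" where "CS \<equiv> count_space UNIV"

lemma cs_sf: "sigma_finite_measure CS"
  by (rule sigma_finite_measure_count_space)

lemma cs_pred: "Measurable.pred (CS \<Otimes>\<^sub>M CS) (P :: int \<times> int \<Rightarrow> bool)"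
  by (simp add: pair_measure_countable)

lemma cs_bound: "integrable CS (g::int\<Rightarrow>real) \<Longrightarrow> (\<And>x. \<bar>f x\<bar> \<le> \<bar>g x\<bar>) \<Longrightarrow> integrable CS f"
  by (rule Bochner_Integration.integrable_bound[where f=g]) auto

lemma cs_if: "integrable CS (g::int\<Rightarrow>real) \<Longrightarrow> integrable CS (\<lambda>x. if P x then g x else 0)"
  by (erule cs_bound) auto

lemma cs_finite:
  assumes "finite A"
  shows "(LINT x|CS. (if x \<in> A then f x else 0)) = (\<Sum>x\<in>A. (f x::real))"
proof -
  have "(LINT x|CS. (if x \<in> A then f x else 0)) = (LINT x|CS. f x * indicator A x)"
    by (rule Bochner_Integration.integral_cong) (auto simp: indicator_def)
  also have "\<dots> = (\<Sum>a\<in>A. f a * measure CS {a})"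
    by (rule integral_indicator_finite_real) (auto simp: assms)
  finally show ?thesis by simp
qed

lemma cs_shift_int: "integrable CS (f::int\<Rightarrow>real) \<Longrightarrow> integrable CS (\<lambda>t. f (t + k))"
proof -
  have b: "bij_betw (\<lambda>t. t + k) UNIV (UNIV::int set)"
    by (rule bij_betwI[where g="\<lambda>t. t - k"]) auto
  show "integrable CS f \<Longrightarrow> integrable CS (\<lambda>t. f (t + k))"
    using integrable_bij_count_space[OF b, of f] by simp
qed

lemma cs_shift: "(LINT t|CS. (f::int\<Rightarrow>real) (t + k)) = (LINT t|CS. f t)"
proof -
  have b: "bij_betw (\<lambda>t. t + k) UNIV (UNIV::int set)"
    by (rule bij_betwI[where g="\<lambda>t. t - k"]) auto
  show ?thesis using integral_bij_count_space[OF b, of f] by simp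
qed

lemma tele_up:
  fixes f :: "int \<Rightarrow> real"
  shows "t \<le> c \<Longrightarrow> (\<Sum>x\<in>{t<..c}. f (x - 1) - f x) = f t - f c"
proof (induction c rule: int_ge_induct)
  case base then show ?case by simp
next
  case (step i)
  have "{t<..i+1} = insert (i+1) {t<..i}" using step by auto
  then show ?case using step by simp
qed

lemma tele_down:
  fixes f :: "int \<Rightarrow> real"
  shows "t \<le> c \<Longrightarrow> (\<Sum>x\<in>{t..c}. f x - f (x + 1)) = f t - f (c + 1)"
proof (induction c rule: int_ge_induct)
  case base then show ?case by simp
next
  case (step i)
  have "{t..i+1} = insert (i+1) {t..i}" using step by auto
  then show ?case using step by simp
qed




lemma disc_l1:
  fixes p :: "int \<Rightarrow> real" and c :: int
  defines "\<rho> \<equiv> (\<lambda>y. if y \<in> supp p then delta 1 p y / p y else 0)"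
  assumes p0: "\<And>x. 0 \<le> p x" and pint: "integrable CS p" and p1: "(LINT x|CS. p x) = 1"
    and Sint0: "\<forall>u v y. u \<in> supp p \<longrightarrow> v \<in> supp p \<longrightarrow> u \<le> y \<longrightarrow> y \<le> v \<longrightarrow> y \<in> supp p"
    and Stail0: "\<forall>t t'. c \<le> t \<longrightarrow> t \<notin> supp p \<longrightarrow> t \<le> t' \<longrightarrow> t' \<notin> supp p"
    and dint: "set_integrable CS (supp p) (delta 1 p)"
    and dsum: "(LINT x:supp p|CS. delta 1 p x) = 0"
    and wint: "integrable CS (delta (-1) \<rho>)"
    and c: "c \<in> supp p"
  shows "integrable CS (\<lambda>x. (indicator (supp p) x * (- delta (-1) \<rho> x)) * covK CS p 1 x c)"
    "(LINT x|CS. (indicator (supp p) x * (- delta (-1) \<rho> x)) * covK CS p 1 x c) = p c"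
proof -
  note Sint = Sint0[rule_format] and Stail = Stail0[rule_format]
  define S where "S = supp p"
  define W where "W x = indicator S x * (- delta (-1) \<rho> x)" for x
  define D where "D t = indicator S t * (p (t+1) - p t)" for t
  have dS: "\<And>t. t \<in> S \<longleftrightarrow> 0 < p t" by (simp add: S_def supp_def)
  have pz: "\<And>t. t \<notin> S \<Longrightarrow> p t = 0" using dS p0 by (metis less_eq_real_def)
  have Wint: "integrable CS W" unfolding W_def using wint
    by (rule cs_bound) (auto simp: indicator_def)
  have Dint: "integrable CS D" using dint unfolding D_def set_integrable_def S_def
    by (simp add: delta_def)
  have Dsum: "(LINT t|CS. D t) = 0" using dsum unfolding D_def set_lebesgue_integral_def S_def
    by (simp add: delta_def)
  have rhop: "\<And>t. p t * \<rho> t = D t"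
    by (auto simp: \<rho>_def D_def S_def[symmetric] delta_def pz dS)
  have wform: "\<And>x. - delta (-1) \<rho> x = \<rho> (x - 1) - \<rho> x" by (simp add: delta_def)
  have ch: "\<And>y. (\<lambda>t. chi 1 t y) \<in> borel_measurable CS" by simp
  let ?G = "Gf CS p 1 c"
  have Gc: "?G = (LINT t|CS. (if t < c then p t else 0))"
    unfolding Gf_def chi_def by (rule Bochner_Integration.integral_cong) auto
  define A where "A = (LINT t|CS. (if t < c then D t else 0))"
  have cS: "c \<in> S" using c S_def by simp
  have P1: "p t * (LINT x|CS. (if x \<le> c \<and> t \<le> x - 1 then W x else 0)) = (if t < c then D t - p t * \<rho> c else 0)" for t
  proof (cases "t \<in> S")
    case tS: True
    show ?thesis
    proof (cases "t < c")
      case True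
      have "(LINT x|CS. (if x \<le> c \<and> t \<le> x - 1 then W x else 0)) = (LINT x|CS. (if x \<in> {t<..c} then \<rho> (x - 1) - \<rho> x else 0))"
      proof (rule Bochner_Integration.integral_cong)
        fix x assume "x \<in> space CS"
        show "(if x \<le> c \<and> t \<le> x - 1 then W x else 0) = (if x \<in> {t<..c} then \<rho> (x - 1) - \<rho> x else 0)"
        proof (cases "x \<in> {t<..c}")
          case True
          then have "x \<in> S" using Sint[of t c x] tS cS unfolding S_def by auto
          then show ?thesis using True by (simp add: W_def wform)
        qed auto
      qed simp
      also have "\<dots> = \<rho> t - \<rho> c"
        using cs_finite[of "{t<..c}" "\<lambda>x. \<rho> (x - 1) - \<rho> x"] tele_up[of t c \<rho>] True by simp
      finally have I: "(LINT x|CS. (if x \<le> c \<and> t \<le> x - 1 then W x else 0)) = \<rho> t - \<rho> c" .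
      show ?thesis unfolding I using True rhop[of t] by (simp add: right_diff_distrib)
    next
      case False
      have "(\<lambda>x. (if x \<le> c \<and> t \<le> x - 1 then W x else 0)) = (\<lambda>x. 0)" using False by auto
      then show ?thesis using False by simp
    qed
  next
    case False
    then show ?thesis using pz[OF False] by (simp add: D_def)
  qed
  have P2: "p t * (LINT x|CS. (if c < x \<and> \<not> t \<le> x - 1 then W x else 0)) = (if c \<le> t then p t * \<rho> c - D t else 0)" for t
  proof (cases "t \<in> S")
    case tS: True
    show ?thesis
    proof (cases "c \<le> t")
      case True
      have "(LINT x|CS. (if c < x \<and> \<not> t \<le> x - 1 then W x else 0)) = (LINT x|CS. (if x \<in> {c<..t} then \<rho> (x - 1) - \<rho> x else 0))"
      proof (rule Bochner_Integration.integral_cong)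
        fix x assume "x \<in> space CS"
        show "(if c < x \<and> \<not> t \<le> x - 1 then W x else 0) = (if x \<in> {c<..t} then \<rho> (x - 1) - \<rho> x else 0)"
        proof (cases "x \<in> {c<..t}")
          case True
          then have "x \<in> S" using Sint[of c t x] tS cS unfolding S_def by auto
          then show ?thesis using True by (simp add: W_def wform)
        qed auto
      qed simp
      also have "\<dots> = \<rho> c - \<rho> t"
        using cs_finite[of "{c<..t}" "\<lambda>x. \<rho> (x - 1) - \<rho> x"] tele_up[of c t \<rho>] True by simp
      finally have I: "(LINT x|CS. (if c < x \<and> \<not> t \<le> x - 1 then W x else 0)) = \<rho> c - \<rho> t" .
      show ?thesis unfolding I using True rhop[of t] by (simp add: right_diff_distrib)
    next
      case False
      have "(\<lambda>x. (if c < x \<and> \<not> t \<le> x - 1 then W x else 0)) = (\<lambda>x. 0)" using False by auto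
      then show ?thesis using False by simp
    qed
  next
    case False
    then show ?thesis using pz[OF False] by (simp add: D_def)
  qed
  have ipl: "integrable CS (\<lambda>t. if t < c then p t else 0)" "integrable CS (\<lambda>t. if c \<le> t then p t else 0)"
    "integrable CS (\<lambda>t. if t < c then D t else 0)" "integrable CS (\<lambda>t. if c \<le> t then D t else 0)"
    using pint Dint by (auto intro: cs_if)
  have E1: "(LINT t|CS. p t * (LINT x|CS. (if x \<le> c \<and> t \<le> x - 1 then W x else 0))) = A - \<rho> c * ?G"
  proof -
    have "(\<lambda>t. p t * (LINT x|CS. (if x \<le> c \<and> t \<le> x - 1 then W x else 0))) = (\<lambda>t. (if t < c then D t else 0) - \<rho> c * (if t < c then p t else 0))"
      by (rule ext) (subst P1, simp)
    then show ?thesis using ipl by (simp add: A_def Gc)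
  qed
  have split_p: "(LINT t|CS. (if c \<le> t then p t else 0)) = 1 - ?G"
  proof -
    have "(LINT t|CS. p t) = (LINT t|CS. (if t < c then p t else 0) + (if c \<le> t then p t else 0))"
      by (rule Bochner_Integration.integral_cong) auto
    then show ?thesis using ipl p1 Gc by simp
  qed
  have split_D: "(LINT t|CS. (if c \<le> t then D t else 0)) = - A"
  proof -
    have "(LINT t|CS. D t) = (LINT t|CS. (if t < c then D t else 0) + (if c \<le> t then D t else 0))"
      by (rule Bochner_Integration.integral_cong) auto
    then show ?thesis using ipl Dsum A_def by simp
  qed
  have E2: "(LINT t|CS. p t * (LINT x|CS. (if c < x \<and> \<not> t \<le> x - 1 then W x else 0))) = \<rho> c * (1 - ?G) + A"
  proof -
    have "(\<lambda>t. p t * (LINT x|CS. (if c < x \<and> \<not> t \<le> x - 1 then W x else 0))) = (\<lambda>t. \<rho> c * (if c \<le> t then p t else 0) - (if c \<le> t then D t else 0))"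
      by (rule ext) (subst P2, simp add: algebra_simps)
    then show ?thesis using ipl split_p split_D by simp
  qed
  have Apc: "A = p c"
  proof -
    have i1: "integrable CS (\<lambda>t. if c \<le> t then p (t+1) else 0)"
      using cs_shift_int[OF pint, of 1] by (rule cs_if)
    have i2: "integrable CS (\<lambda>t. if c + 1 \<le> t then p t else 0)" using pint by (rule cs_if)
    have "(LINT t|CS. (if c \<le> t then D t else 0)) = (LINT t|CS. (if c \<le> t then p (t+1) else 0) - (if c \<le> t then p t else 0))"
    proof (rule Bochner_Integration.integral_cong)
      fix t show "(if c \<le> t then D t else 0) = (if c \<le> t then p (t + 1) else 0) - (if c \<le> t then p t else 0)"
      proof (cases "c \<le> t \<and> t \<notin> S")
        case True
        then have "t + 1 \<notin> S" using Stail[of t "t+1"] S_def by auto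
        then show ?thesis using True pz by (simp add: D_def)
      qed (auto simp: D_def)
    qed simp
    also have "\<dots> = (LINT t|CS. (if c \<le> t then p (t+1) else 0)) - (LINT t|CS. (if c \<le> t then p t else 0))"
      using i1 ipl by simp
    also have "(LINT t|CS. (if c \<le> t then p (t+1) else 0)) = (LINT t|CS. (if c + 1 \<le> t then p t else 0))"
      using cs_shift[of "\<lambda>t. if c + 1 \<le> t then p t else 0" 1] by simp
    also have "(LINT t|CS. (if c \<le> t then p t else 0)) = (LINT t|CS. (if t \<in> {c} then p t else 0) + (if c + 1 \<le> t then p t else 0))"
      by (rule Bochner_Integration.integral_cong) auto
    also have "\<dots> = p c + (LINT t|CS. (if c + 1 \<le> t then p t else 0))"
      using i2 cs_if[OF pint, of "\<lambda>t. t \<in> {c}"] cs_finite[of "{c}" p] by simp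
    finally show ?thesis using split_D by simp
  qed
  note MG = main_generic[OF cs_sf pint p1 ch Wint cs_pred cs_pred E1 E2]
  show "integrable CS (\<lambda>x. (indicator (supp p) x * (- delta (-1) \<rho> x)) * covK CS p 1 x c)"
    using MG(1) by (simp add: W_def S_def)
  show "(LINT x|CS. (indicator (supp p) x * (- delta (-1) \<rho> x)) * covK CS p 1 x c) = p c"
    using MG(2) Apc by (simp add: W_def S_def)
qed




lemma tele_lo:
  fixes f :: "int \<Rightarrow> real"
  shows "t \<le> c \<Longrightarrow> (\<Sum>x\<in>{t..<c}. f x - f (x + 1)) = f t - f c"
proof (induction c rule: int_ge_induct)
  case base then show ?case by simp
next
  case (step i)
  have "{t..<i+1} = insert i {t..<i}" using step by auto
  then show ?case using step by simp
qed

lemma disc_lm1: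
  fixes p :: "int \<Rightarrow> real" and c :: int
  defines "\<rho> \<equiv> (\<lambda>y. if y \<in> supp p then delta (-1) p y / p y else 0)"
  assumes p0: "\<And>x. 0 \<le> p x" and pint: "integrable CS p" and p1: "(LINT x|CS. p x) = 1"
    and Sint0: "\<forall>u v y. u \<in> supp p \<longrightarrow> v \<in> supp p \<longrightarrow> u \<le> y \<longrightarrow> y \<le> v \<longrightarrow> y \<in> supp p"
    and Stail0: "\<forall>t t'. t \<le> c \<longrightarrow> t \<notin> supp p \<longrightarrow> t' \<le> t \<longrightarrow> t' \<notin> supp p"
    and dint: "set_integrable CS (supp p) (delta (-1) p)"
    and dsum: "(LINT x:supp p|CS. delta (-1) p x) = 0"
    and wint: "integrable CS (delta 1 \<rho>)"
    and c: "c \<in> supp p"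
  shows "integrable CS (\<lambda>x. (indicator (supp p) x * (- delta 1 \<rho> x)) * covK CS p 0 x c)"
    "(LINT x|CS. (indicator (supp p) x * (- delta 1 \<rho> x)) * covK CS p 0 x c) = p c"
proof -
  note Sint = Sint0[rule_format] and Stail = Stail0[rule_format]
  define S where "S = supp p"
  define W where "W x = indicator S x * (- delta 1 \<rho> x)" for x
  define D where "D t = indicator S t * (p t - p (t - 1))" for t
  have dS: "\<And>t. t \<in> S \<longleftrightarrow> 0 < p t" by (simp add: S_def supp_def)
  have pz: "\<And>t. t \<notin> S \<Longrightarrow> p t = 0" using dS p0 by (metis less_eq_real_def)
  have Wint: "integrable CS W" unfolding W_def using wint
    by (rule cs_bound) (auto simp: indicator_def)
  have Dint: "integrable CS D" using dint unfolding D_def set_integrable_def S_def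
    by (simp add: delta_def)
  have Dsum: "(LINT t|CS. D t) = 0" using dsum unfolding D_def set_lebesgue_integral_def S_def
    by (simp add: delta_def)
  have rhop: "\<And>t. p t * \<rho> t = D t"
    by (auto simp: \<rho>_def D_def S_def[symmetric] delta_def pz dS)
  have wform: "\<And>x. - delta 1 \<rho> x = \<rho> x - \<rho> (x + 1)" by (simp add: delta_def)
  have ch: "\<And>y. (\<lambda>t. chi 0 t y) \<in> borel_measurable CS" by simp
  let ?G = "Gf CS p 0 c"
  let ?r = "\<rho> (c + 1)"
  have Gc: "?G = (LINT t|CS. (if t \<le> c then p t else 0))"
    unfolding Gf_def chi_def by (rule Bochner_Integration.integral_cong) auto
  define A where "A = (LINT t|CS. (if t \<le> c then D t else 0))"
  have cS: "c \<in> S" using c S_def by simp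
  have P1: "p t * (LINT x|CS. (if x \<le> c \<and> t \<le> x - 0 then W x else 0)) = (if t \<le> c then D t - p t * ?r else 0)" for t
  proof (cases "t \<in> S")
    case tS: True
    show ?thesis
    proof (cases "t \<le> c")
      case True
      have "(LINT x|CS. (if x \<le> c \<and> t \<le> x - 0 then W x else 0)) = (LINT x|CS. (if x \<in> {t..<c+1} then \<rho> x - \<rho> (x + 1) else 0))"
      proof (rule Bochner_Integration.integral_cong)
        fix x assume "x \<in> space CS"
        show "(if x \<le> c \<and> t \<le> x - 0 then W x else 0) = (if x \<in> {t..<c+1} then \<rho> x - \<rho> (x + 1) else 0)"
        proof (cases "x \<in> {t..<c+1}")
          case True
          then have "x \<in> S" using Sint[of t c x] tS cS unfolding S_def by auto
          then show ?thesis using True by (simp add: W_def wform)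
        qed auto
      qed simp
      also have "\<dots> = \<rho> t - ?r"
        using cs_finite[of "{t..<c+1}" "\<lambda>x. \<rho> x - \<rho> (x + 1)"] tele_lo[of t "c+1" \<rho>] True by simp
      finally have I: "(LINT x|CS. (if x \<le> c \<and> t \<le> x - 0 then W x else 0)) = \<rho> t - ?r" .
      show ?thesis unfolding I using True rhop[of t] by (simp add: right_diff_distrib)
    next
      case False
      have "(\<lambda>x. (if x \<le> c \<and> t \<le> x - 0 then W x else 0)) = (\<lambda>x. 0)" using False by auto
      then show ?thesis using False by simp
    qed
  next
    case False
    then show ?thesis using pz[OF False] by (simp add: D_def)
  qed
  have P2: "p t * (LINT x|CS. (if c < x \<and> \<not> t \<le> x - 0 then W x else 0)) = (if c < t then p t * ?r - D t else 0)" for t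
  proof (cases "t \<in> S")
    case tS: True
    show ?thesis
    proof (cases "c < t")
      case True
      have "(LINT x|CS. (if c < x \<and> \<not> t \<le> x - 0 then W x else 0)) = (LINT x|CS. (if x \<in> {c+1..<t} then \<rho> x - \<rho> (x + 1) else 0))"
      proof (rule Bochner_Integration.integral_cong)
        fix x assume "x \<in> space CS"
        show "(if c < x \<and> \<not> t \<le> x - 0 then W x else 0) = (if x \<in> {c+1..<t} then \<rho> x - \<rho> (x + 1) else 0)"
        proof (cases "x \<in> {c+1..<t}")
          case True
          then have "x \<in> S" using Sint[of c t x] tS cS unfolding S_def by auto
          then show ?thesis using True by (simp add: W_def wform)
        qed auto
      qed simp
      also have "\<dots> = ?r - \<rho> t"
        using cs_finite[of "{c+1..<t}" "\<lambda>x. \<rho> x - \<rho> (x + 1)"] tele_lo[of "c+1" t \<rho>] True by simp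
      finally have I: "(LINT x|CS. (if c < x \<and> \<not> t \<le> x - 0 then W x else 0)) = ?r - \<rho> t" .
      show ?thesis unfolding I using True rhop[of t] by (simp add: right_diff_distrib)
    next
      case False
      have "(\<lambda>x. (if c < x \<and> \<not> t \<le> x - 0 then W x else 0)) = (\<lambda>x. 0)" using False by auto
      then show ?thesis using False by simp
    qed
  next
    case False
    then show ?thesis using pz[OF False] by (simp add: D_def)
  qed
  have ipl: "integrable CS (\<lambda>t. if t \<le> c then p t else 0)" "integrable CS (\<lambda>t. if c < t then p t else 0)"
    "integrable CS (\<lambda>t. if t \<le> c then D t else 0)" "integrable CS (\<lambda>t. if c < t then D t else 0)"
    using pint Dint by (auto intro: cs_if)
  have E1: "(LINT t|CS. p t * (LINT x|CS. (if x \<le> c \<and> t \<le> x - 0 then W x else 0))) = A - ?r * ?G"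
  proof -
    have "(\<lambda>t. p t * (LINT x|CS. (if x \<le> c \<and> t \<le> x - 0 then W x else 0))) = (\<lambda>t. (if t \<le> c then D t else 0) - ?r * (if t \<le> c then p t else 0))"
      by (rule ext) (subst P1, simp)
    then show ?thesis using ipl by (simp add: A_def Gc)
  qed
  have split_p: "(LINT t|CS. (if c < t then p t else 0)) = 1 - ?G"
  proof -
    have "(LINT t|CS. p t) = (LINT t|CS. (if t \<le> c then p t else 0) + (if c < t then p t else 0))"
      by (rule Bochner_Integration.integral_cong) auto
    then show ?thesis using ipl p1 Gc by simp
  qed
  have split_D: "(LINT t|CS. (if c < t then D t else 0)) = - A"
  proof -
    have "(LINT t|CS. D t) = (LINT t|CS. (if t \<le> c then D t else 0) + (if c < t then D t else 0))"
      by (rule Bochner_Integration.integral_cong) auto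
    then show ?thesis using ipl Dsum A_def by simp
  qed
  have E2: "(LINT t|CS. p t * (LINT x|CS. (if c < x \<and> \<not> t \<le> x - 0 then W x else 0))) = ?r * (1 - ?G) + A"
  proof -
    have "(\<lambda>t. p t * (LINT x|CS. (if c < x \<and> \<not> t \<le> x - 0 then W x else 0))) = (\<lambda>t. ?r * (if c < t then p t else 0) - (if c < t then D t else 0))"
      by (rule ext) (subst P2, simp add: algebra_simps)
    then show ?thesis using ipl split_p split_D by simp
  qed
  have Apc: "A = p c"
  proof -
    have i1: "integrable CS (\<lambda>t. if t \<le> c then p (t + -1) else 0)"
      using cs_shift_int[OF pint, of "-1"] by (rule cs_if)
    have i2: "integrable CS (\<lambda>t. if t \<le> c - 1 then p t else 0)" using pint by (rule cs_if)
    have "A = (LINT t|CS. (if t \<le> c then p t else 0) - (if t \<le> c then p (t + -1) else 0))"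
      unfolding A_def
    proof (rule Bochner_Integration.integral_cong)
      fix t show "(if t \<le> c then D t else 0) = (if t \<le> c then p t else 0) - (if t \<le> c then p (t + -1) else 0)"
      proof (cases "t \<le> c \<and> t \<notin> S")
        case True
        then have "t - 1 \<notin> S" using Stail[of t "t-1"] S_def by auto
        then show ?thesis using True pz by (simp add: D_def)
      qed (auto simp: D_def)
    qed simp
    also have "\<dots> = (LINT t|CS. (if t \<le> c then p t else 0)) - (LINT t|CS. (if t \<le> c then p (t + -1) else 0))"
      using i1 ipl by simp
    also have "(LINT t|CS. (if t \<le> c then p (t + -1) else 0)) = (LINT t|CS. (if t \<le> c - 1 then p t else 0))"
    proof -
      have "(LINT t|CS. (if t \<le> c then p (t + -1) else 0)) = (LINT t|CS. (\<lambda>t. if t \<le> c - 1 then p t else 0) (t + -1))"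
        by (rule Bochner_Integration.integral_cong) auto
      also have "\<dots> = (LINT t|CS. (if t \<le> c - 1 then p t else 0))" by (rule cs_shift)
      finally show ?thesis .
    qed
    also have "(LINT t|CS. (if t \<le> c then p t else 0)) = (LINT t|CS. (if t \<in> {c} then p t else 0) + (if t \<le> c - 1 then p t else 0))"
      by (rule Bochner_Integration.integral_cong) auto
    also have "\<dots> = p c + (LINT t|CS. (if t \<le> c - 1 then p t else 0))"
      using i2 cs_if[OF pint, of "\<lambda>t. t \<in> {c}"] cs_finite[of "{c}" p] by simp
    finally show ?thesis by simp
  qed
  note MG = main_generic[OF cs_sf pint p1 ch Wint cs_pred cs_pred E1 E2]
  show "integrable CS (\<lambda>x. (indicator (supp p) x * (- delta 1 \<rho> x)) * covK CS p 0 x c)"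
    using MG(1) by (simp add: W_def S_def)
  show "(LINT x|CS. (indicator (supp p) x * (- delta 1 \<rho> x)) * covK CS p 0 x c) = p c"
    using MG(2) Apc by (simp add: W_def S_def)
qed




lemma weak_cont:
  assumes "has_weak_deriv_on p g UNIV"
  shows "continuous_on UNIV p"
proof (rule continuous_at_imp_continuous_on, intro ballI)
  fix x0 :: real
  let ?l = "x0 - 1" and ?u = "x0 + 1"
  have gi: "g integrable_on {?l..?u}"
    using assms unfolding has_weak_deriv_on_def by (auto intro: set_borel_integral_eq_integral(1))
  have eq: "p y = p ?l + integral {?l..y} g" if "y \<in> {?l..?u}" for y
  proof -
    have "set_integrable lborel {?l..y} g \<and> p y - p ?l = (LINT t:{?l..y}|lborel. g t)"
      using assms that unfolding has_weak_deriv_on_def by auto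
    then show ?thesis using set_borel_integral_eq_integral(2) by fastforce
  qed
  have "continuous_on {?l..?u} (\<lambda>y. p ?l + integral {?l..y} g)"
    by (intro continuous_intros indefinite_integral_continuous_1 gi)
  then have "continuous_on {?l..?u} p" using eq by (metis (no_types, lifting) continuous_on_cong)
  then show "isCont p x0"
    by (rule continuous_on_interior) (auto simp: interior_atLeastAtMost_real)
qed

lemma test_pred_aux: "Measurable.pred (lborel \<Otimes>\<^sub>M lborel) (\<lambda>z::real\<times>real. fst z \<le> c \<and> snd z \<le> fst z - 0)"
  "Measurable.pred (lborel \<Otimes>\<^sub>M lborel) (\<lambda>z::real\<times>real. c < fst z \<and> \<not> snd z \<le> fst z - 0)"
  by measurable




lemma int_ind_const: "(LINT x|lborel. indicator {u..v} x * (e::real)) = e * (v - u)" if "u \<le> v"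
  using that by (simp add: mult.commute)

lemma pos_somewhere:
  fixes p :: "real \<Rightarrow> real"
  assumes p0: "\<And>x. 0 \<le> p x" and pint: "integrable lborel p" and p1: "(LINT x|lborel. p x) = 1"
  shows "\<exists>s. s \<le> m \<and> p s < inverse (real (Suc n))"
proof (rule ccontr)
  assume "\<not> ?thesis"
  then have ge: "\<And>s. s \<le> m \<Longrightarrow> inverse (real (Suc n)) \<le> p s" by (meson not_less)
  define e where "e = inverse (real (Suc n))"
  define k where "k = real (Suc n) + 1"
  have epos: "0 < e" by (simp add: e_def)
  have k0: "0 \<le> k" by (simp add: k_def)
  have i1: "integrable lborel (\<lambda>x. indicator {m-k..m} x * e)" using k0 by (simp add: integrable_indicator_iff)
  have i2: "integrable lborel (\<lambda>x. indicator {m-k..m} x * p x)"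
    using integrable_mult_indicator[OF _ pint, of "{m-k..m}"] by simp
  have "(LINT x|lborel. indicator {m-k..m} x * e) \<le> (LINT x|lborel. indicator {m-k..m} x * p x)"
    using i1 i2 ge by (intro integral_mono) (auto simp: indicator_def e_def)
  also have "\<dots> \<le> (LINT x|lborel. p x)"
    using i2 pint p0 by (intro integral_mono) (auto simp: indicator_def)
  finally have "e * k \<le> 1" using int_ind_const[of "m-k" m e] k0 p1 by (simp add: mult.commute)
  moreover have "e * k > 1" unfolding e_def k_def by (simp add: field_simps)
  ultimately show False by simp
qed

lemma bdry:
  fixes p g :: "real \<Rightarrow> real" and a b :: ereal
  assumes p0: "\<And>x. 0 \<le> p x" and pint: "integrable lborel p" and p1: "(LINT x|lborel. p x) = 1"
    and pc: "continuous_on UNIV p"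
    and S: "supp p = {x. a < ereal x \<and> ereal x < b}"
    and hp: "has_weak_deriv_on p g UNIV"
    and gint: "set_integrable lborel (supp p) g"
    and c: "c \<in> supp p"
  shows "(LINT t|lborel. (if t \<le> c then indicator (supp p) t * g t else 0)) = p c"
proof -
  have pS: "\<And>t. t \<in> supp p \<longleftrightarrow> 0 < p t" by (simp add: supp_def)
  have ac: "a < ereal c" and cb: "ereal c < b" using c S by auto
  obtain s :: "nat \<Rightarrow> real" where sa: "\<And>n. a < ereal (s n)" and sc: "\<And>n. s n \<le> c"
    and sp: "(\<lambda>n. p (s n)) \<longlonglongrightarrow> 0" and sl: "(\<lambda>n. ereal (s n)) \<longlonglongrightarrow> a"
  proof (cases a)
    case (real a0)
    define s where "s n = a0 + (c - a0) * inverse (real (Suc n))" for n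
    have a0c: "a0 < c" using ac real by simp
    have "(\<lambda>n. s n) \<longlonglongrightarrow> a0 + (c - a0) * 0" unfolding s_def
      by (intro tendsto_intros LIMSEQ_inverse_real_of_nat)
    then have st: "s \<longlonglongrightarrow> a0" by simp
    have "\<not> 0 < p a0" using pS S real by auto
    then have pa0: "p a0 = 0" using p0[of a0] by simp
    have "(\<lambda>n. p (s n)) \<longlonglongrightarrow> p a0"
    proof -
      have "isCont p a0" using pc by (simp add: continuous_on_eq_continuous_at)
      then show ?thesis using st by (rule isCont_tendsto_compose)
    qed
    then have sp: "(\<lambda>n. p (s n)) \<longlonglongrightarrow> 0" using pa0 by simp
    have sa: "a < ereal (s n)" for n using a0c real by (simp add: s_def)
    have sc: "s n \<le> c" for n
    proof -
      have "(c - a0) * inverse (real (Suc n)) \<le> (c - a0) * 1"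
        using a0c by (intro mult_left_mono) (auto simp: field_simps)
      then show ?thesis by (simp add: s_def)
    qed
    have sl: "(\<lambda>n. ereal (s n)) \<longlonglongrightarrow> a" using st real by (simp add: tendsto_ereal)
    show ?thesis using that sa sc sp sl by blast
  next
    case PInf then show ?thesis using ac by simp
  next
    case MInf
    have "\<forall>n. \<exists>s. s \<le> min c (- real n) \<and> p s < inverse (real (Suc n))"
      using pos_somewhere[OF p0 pint p1] by blast
    then obtain s where s: "\<And>n. s n \<le> min c (- real n)" "\<And>n. p (s n) < inverse (real (Suc n))"
      by metis
    have sp: "(\<lambda>n. p (s n)) \<longlonglongrightarrow> 0"
    proof (rule Lim_null_comparison[OF _ LIMSEQ_inverse_real_of_nat])
      show "\<forall>\<^sub>F n in sequentially. norm (p (s n)) \<le> inverse (real (Suc n))"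
        using s(2) p0 by (auto intro!: always_eventually less_imp_le)
    qed
    have sl: "(\<lambda>n. ereal (s n)) \<longlonglongrightarrow> a" unfolding MInf tendsto_MInfty
    proof
      fix r :: real
      obtain N :: nat where N: "- r < real N" using reals_Archimedean2 by blast
      show "\<forall>\<^sub>F n in sequentially. ereal (s n) < ereal r"
      proof (rule eventually_sequentiallyI[of N])
        fix n assume "N \<le> n"
        then have "real N \<le> real n" by simp
        then show "ereal (s n) < ereal r" using s(1)[of n] N by simp
      qed
    qed
    show ?thesis using that[of s] MInf s(1) sp sl by simp
  qed
  define D where "D t = indicator (supp p) t * g t" for t
  have Dint: "integrable lborel D" using gint unfolding set_integrable_def D_def by simp
  have [measurable]: "D \<in> borel_measurable lborel" using Dint by auto
  define f where "f t = (if t \<le> c then D t else 0)" for t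
  define fn where "fn n t = (if s n \<le> t \<and> t \<le> c then D t else 0)" for n t
  have fnI: "(LINT t|lborel. fn n t) = p c - p (s n)" for n
  proof -
    have "set_integrable lborel {s n..c} g \<and> p c - p (s n) = (LINT t:{s n..c}|lborel. g t)"
      using hp sc[of n] unfolding has_weak_deriv_on_def by auto
    then have "p c - p (s n) = (LINT t|lborel. indicator {s n..c} t * g t)"
      by (simp add: set_lebesgue_integral_def)
    also have "\<dots> = (LINT t|lborel. fn n t)"
    proof (rule Bochner_Integration.integral_cong)
      fix t
      show "indicator {s n..c} t * g t = fn n t"
      proof (cases "s n \<le> t \<and> t \<le> c")
        case True
        have t1: "ereal (s n) \<le> ereal t" using True by simp
        have t2: "ereal t \<le> ereal c" using True by simp
        have "a < ereal t" using order_less_le_trans[OF sa[of n] t1] .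
        moreover have "ereal t < b" using order_le_less_trans[OF t2 cb] .
        ultimately have "t \<in> supp p" using S by simp
        then show ?thesis using True by (simp add: fn_def D_def)
      qed (auto simp: fn_def)
    qed simp
    finally show ?thesis by simp
  qed
  have lim: "(\<lambda>n. LINT t|lborel. fn n t) \<longlonglongrightarrow> (LINT t|lborel. f t)"
  proof (rule integral_dominated_convergence[where w="\<lambda>t. norm (D t)"])
    show "f \<in> borel_measurable lborel" unfolding f_def by measurable
    show "\<And>n. fn n \<in> borel_measurable lborel" unfolding fn_def by measurable
    show "integrable lborel (\<lambda>t. norm (D t))" using Dint by simp
    show "\<And>n. AE t in lborel. norm (fn n t) \<le> norm (D t)" by (auto simp: fn_def)
    show "AE t in lborel. (\<lambda>n. fn n t) \<longlonglongrightarrow> f t"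
    proof (rule AE_I2)
      fix t
      show "(\<lambda>n. fn n t) \<longlonglongrightarrow> f t"
      proof (cases "t \<le> c \<and> t \<in> supp p")
        case True
        then have "a < ereal t" using S by simp
        then have "\<forall>\<^sub>F n in sequentially. ereal (s n) < ereal t"
          using order_tendstoD(2)[OF sl] by blast
        then have "\<forall>\<^sub>F n in sequentially. fn n t = f t"
          by eventually_elim (use True in \<open>auto simp: fn_def f_def\<close>)
        then show ?thesis by (rule tendsto_eventually)
      next
        case False
        then have "\<And>n. fn n t = f t" by (auto simp: fn_def f_def D_def)
        then show ?thesis by simp
      qed
    qed
  qed
  moreover have "(\<lambda>n. LINT t|lborel. fn n t) \<longlonglongrightarrow> p c - 0"
    unfolding fnI by (intro tendsto_intros sp)
  ultimately have "(LINT t|lborel. f t) = p c" using LIMSEQ_unique by fastforce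
  then show ?thesis unfolding f_def D_def by simp
qed




lemma lb_if_le: "integrable lborel (f::real\<Rightarrow>real) \<Longrightarrow> integrable lborel (\<lambda>t. if t \<le> c then f t else 0)"
proof -
  assume f: "integrable lborel f"
  then have [measurable]: "f \<in> borel_measurable lborel" by auto
  show ?thesis by (rule Bochner_Integration.integrable_bound[OF f]) auto
qed

lemma lb_if_gr: "integrable lborel (f::real\<Rightarrow>real) \<Longrightarrow> integrable lborel (\<lambda>t. if c < t then f t else 0)"
proof -
  assume f: "integrable lborel f"
  then have [measurable]: "f \<in> borel_measurable lborel" by auto
  show ?thesis by (rule Bochner_Integration.integrable_bound[OF f]) auto
qed

lemma chi0_meas: "(\<lambda>t. chi (0::real) t y) \<in> borel_measurable lborel"
proof -
  have "(\<lambda>t. chi (0::real) t y) = indicator {..y}" by (auto simp: chi_def indicator_def)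
  then show ?thesis by simp
qed

lemma cont_main:
  fixes p g h :: "real \<Rightarrow> real" and a b :: ereal and c :: real
  defines "\<rho> \<equiv> (\<lambda>x. if x \<in> supp p then g x / p x else 0)"
  assumes p0: "\<And>x. 0 \<le> p x" and pint: "integrable lborel p" and p1: "(LINT x|lborel. p x) = 1"
    and intS: "interior (supp p) = {x. a < ereal x \<and> ereal x < b}"
    and hp: "has_weak_deriv_on p g UNIV"
    and gint: "set_integrable lborel (supp p) g" and gsum: "(LINT x:supp p|lborel. g x) = 0"
    and hr: "has_weak_deriv_on \<rho> h (interior (supp p))"
    and hint: "set_integrable lborel (supp p) h"
    and c: "c \<in> supp p"
  shows "integrable lborel (\<lambda>x. (indicator (supp p) x * (- h x)) * covK lborel p 0 x c)"
    "(LINT x|lborel. (indicator (supp p) x * (- h x)) * covK lborel p 0 x c) = p c"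
proof -
  define S where "S = supp p"
  have pc: "continuous_on UNIV p" by (rule weak_cont[OF hp])
  have "open {x. (\<lambda>_. 0::real) x < p x}"
    by (rule open_Collect_less[OF continuous_on_const pc])
  then have oS: "open S" by (simp add: S_def supp_def)
  have Sform: "S = {x. a < ereal x \<and> ereal x < b}" using intS oS interior_open S_def by metis
  have Sform': "supp p = {x. a < ereal x \<and> ereal x < b}" using Sform S_def by simp
  have Sint: "y \<in> S" if "u \<in> S" "v \<in> S" "u \<le> y" "y \<le> v" for u v y
  proof -
    have l: "ereal u \<le> ereal y" and r: "ereal y \<le> ereal v" using that by auto
    have "a < ereal u" "ereal v < b" using that Sform by auto
    then have "a < ereal y" "ereal y < b"
      using order_less_le_trans[OF _ l] order_le_less_trans[OF r] by auto
    then show ?thesis using Sform by simp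
  qed
  have cS: "c \<in> S" using c S_def by simp
  define D where "D t = indicator S t * g t" for t
  define W where "W x = indicator S x * (- h x)" for x
  have dS: "\<And>t. t \<in> S \<longleftrightarrow> 0 < p t" by (simp add: S_def supp_def)
  have pz: "\<And>t. t \<notin> S \<Longrightarrow> p t = 0" using dS p0 by (metis less_eq_real_def)
  have Dint: "integrable lborel D" using gint unfolding set_integrable_def D_def S_def by simp
  have Wint: "integrable lborel W" using hint unfolding set_integrable_def W_def S_def by simp
  have [measurable]: "W \<in> borel_measurable lborel" using Wint by auto
  have Dsum: "(LINT t|lborel. D t) = 0" using gsum unfolding set_lebesgue_integral_def D_def S_def by simp
  have rhop: "\<And>t. p t * \<rho> t = D t"
    by (auto simp: \<rho>_def D_def S_def[symmetric] pz dS)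
  have hr': "set_integrable lborel {x..y} h \<and> \<rho> y - \<rho> x = (LINT t:{x..y}|lborel. h t)"
    if "x \<in> S" "y \<in> S" "x \<le> y" for x y
    using hr that oS unfolding has_weak_deriv_on_def S_def by (simp add: interior_open)
  have A: "(LINT t|lborel. (if t \<le> c then D t else 0)) = p c"
    using bdry[OF p0 pint p1 pc Sform' hp gint c] unfolding D_def S_def .
  have ch: "\<And>y::real. (\<lambda>t. chi 0 t y) \<in> borel_measurable lborel" by (rule chi0_meas)
  let ?G = "Gf lborel p 0 c"
  have Gc: "?G = (LINT t|lborel. (if t \<le> c then p t else 0))"
    unfolding Gf_def chi_def by (rule Bochner_Integration.integral_cong) auto
  have P1: "p t * (LINT x|lborel. (if x \<le> c \<and> t \<le> x - 0 then W x else 0)) = (if t \<le> c then D t - p t * \<rho> c else 0)" for t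
  proof (cases "t \<in> S")
    case tS: True
    show ?thesis
    proof (cases "t \<le> c")
      case True
      have "(LINT x|lborel. (if x \<le> c \<and> t \<le> x - 0 then W x else 0)) = (LINT x|lborel. - (indicator {t..c} x * h x))"
      proof (rule Bochner_Integration.integral_cong)
        fix x
        show "(if x \<le> c \<and> t \<le> x - 0 then W x else 0) = - (indicator {t..c} x * h x)"
        proof (cases "t \<le> x \<and> x \<le> c")
          case True
          then have "x \<in> S" using Sint[of t c x] tS cS by auto
          then show ?thesis using True by (simp add: W_def)
        qed auto
      qed simp
      also have "\<dots> = - (\<rho> c - \<rho> t)" using hr'[OF tS cS True] by (simp add: set_lebesgue_integral_def)
      finally have I: "(LINT x|lborel. (if x \<le> c \<and> t \<le> x - 0 then W x else 0)) = \<rho> t - \<rho> c" by simp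
      show ?thesis unfolding I using True rhop[of t] by (simp add: right_diff_distrib)
    next
      case False
      have "(\<lambda>x. (if x \<le> c \<and> t \<le> x - 0 then W x else 0)) = (\<lambda>x. 0)" using False by auto
      then show ?thesis using False by simp
    qed
  next
    case False
    then show ?thesis using pz[OF False] by (simp add: D_def)
  qed
  have P2: "p t * (LINT x|lborel. (if c < x \<and> \<not> t \<le> x - 0 then W x else 0)) = (if c < t then p t * \<rho> c - D t else 0)" for t
  proof (cases "t \<in> S")
    case tS: True
    show ?thesis
    proof (cases "c < t")
      case True
      note h2 = hr'[OF cS tS less_imp_le[OF True]]
      have [measurable]: "(\<lambda>x. indicator {c..t} x * h x) \<in> borel_measurable lborel"
        using h2 unfolding set_integrable_def by auto
      have "(LINT x|lborel. (if c < x \<and> \<not> t \<le> x - 0 then W x else 0)) = (LINT x|lborel. - (indicator {c..t} x * h x))"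
      proof (rule integral_cong_AE)
        show "(\<lambda>x. if c < x \<and> \<not> t \<le> x - 0 then W x else 0) \<in> borel_measurable lborel" by measurable
        show "(\<lambda>x. - (indicator {c..t} x * h x)) \<in> borel_measurable lborel" by measurable
        have "AE x in lborel. x \<noteq> c" "AE x in lborel. x \<noteq> t" by (rule AE_lborel_singleton)+
        then show "AE x in lborel. (if c < x \<and> \<not> t \<le> x - 0 then W x else 0) = - (indicator {c..t} x * h x)"
        proof eventually_elim
          fix x assume x: "x \<noteq> c" "x \<noteq> t"
          show "(if c < x \<and> \<not> t \<le> x - 0 then W x else 0) = - (indicator {c..t} x * h x)"
          proof (cases "c < x \<and> x < t")
            case True
            then have "x \<in> S" using Sint[of c t x] tS cS by auto
            then show ?thesis using True by (simp add: W_def)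
          qed (use x in auto)
        qed
      qed
      also have "\<dots> = - (\<rho> t - \<rho> c)" using h2 by (simp add: set_lebesgue_integral_def)
      finally have I: "(LINT x|lborel. (if c < x \<and> \<not> t \<le> x - 0 then W x else 0)) = \<rho> c - \<rho> t" by simp
      show ?thesis unfolding I using True rhop[of t] by (simp add: right_diff_distrib)
    next
      case False
      have "(\<lambda>x. (if c < x \<and> \<not> t \<le> x - 0 then W x else 0)) = (\<lambda>x. 0)" using False by auto
      then show ?thesis using False by simp
    qed
  next
    case False
    then show ?thesis using pz[OF False] by (simp add: D_def)
  qed
  have ipl: "integrable lborel (\<lambda>t. if t \<le> c then p t else 0)" "integrable lborel (\<lambda>t. if c < t then p t else 0)"
    "integrable lborel (\<lambda>t. if t \<le> c then D t else 0)" "integrable lborel (\<lambda>t. if c < t then D t else 0)"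
    using pint Dint by (auto intro: lb_if_le lb_if_gr)
  define A' where "A' = (LINT t|lborel. (if t \<le> c then D t else 0))"
  have E1: "(LINT t|lborel. p t * (LINT x|lborel. (if x \<le> c \<and> t \<le> x - 0 then W x else 0))) = A' - \<rho> c * ?G"
  proof -
    have "(\<lambda>t. p t * (LINT x|lborel. (if x \<le> c \<and> t \<le> x - 0 then W x else 0))) = (\<lambda>t. (if t \<le> c then D t else 0) - \<rho> c * (if t \<le> c then p t else 0))"
      by (rule ext) (subst P1, simp)
    then show ?thesis using ipl by (simp add: A'_def Gc)
  qed
  have split_p: "(LINT t|lborel. (if c < t then p t else 0)) = 1 - ?G"
  proof -
    have "(LINT t|lborel. p t) = (LINT t|lborel. (if t \<le> c then p t else 0) + (if c < t then p t else 0))"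
      by (rule Bochner_Integration.integral_cong) auto
    then show ?thesis using ipl p1 Gc by simp
  qed
  have split_D: "(LINT t|lborel. (if c < t then D t else 0)) = - A'"
  proof -
    have "(LINT t|lborel. D t) = (LINT t|lborel. (if t \<le> c then D t else 0) + (if c < t then D t else 0))"
      by (rule Bochner_Integration.integral_cong) auto
    then show ?thesis using ipl Dsum A'_def by simp
  qed
  have E2: "(LINT t|lborel. p t * (LINT x|lborel. (if c < x \<and> \<not> t \<le> x - 0 then W x else 0))) = \<rho> c * (1 - ?G) + A'"
  proof -
    have "(\<lambda>t. p t * (LINT x|lborel. (if c < x \<and> \<not> t \<le> x - 0 then W x else 0))) = (\<lambda>t. \<rho> c * (if c < t then p t else 0) - (if c < t then D t else 0))"
      by (rule ext) (subst P2, simp add: algebra_simps)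
    then show ?thesis using ipl split_p split_D by simp
  qed
  have R1: "Measurable.pred (lborel \<Otimes>\<^sub>M lborel) (\<lambda>z::real\<times>real. fst z \<le> c \<and> snd z \<le> fst z - 0)"
    and R2: "Measurable.pred (lborel \<Otimes>\<^sub>M lborel) (\<lambda>z::real\<times>real. c < fst z \<and> \<not> snd z \<le> fst z - 0)"
    by measurable
  note MG = main_generic[OF sigma_finite_lborel pint p1 ch Wint R1 R2 E1 E2]
  show "integrable lborel (\<lambda>x. (indicator (supp p) x * (- h x)) * covK lborel p 0 x c)"
    using MG(1) by (simp add: W_def S_def)
  show "(LINT x|lborel. (indicator (supp p) x * (- h x)) * covK lborel p 0 x c) = p c"
    using MG(2) A by (simp add: W_def S_def A'_def)
qed




lemma pd_assemble:
  fixes M :: "'a measure" and S and w K :: "'a \<Rightarrow> real"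
  assumes I: "integrable M (\<lambda>x. (indicator S x * w x) * K x)"
    and E: "(LINT x|M. (indicator S x * w x) * K x) = pc"
    and pc: "0 < pc" and K: "\<And>x. 0 \<le> K x" and AE: "AE x in M. x \<in> S \<longrightarrow> 0 < w x"
  shows "prob_density_on M S (\<lambda>x. K x / pc * w x)"
proof -
  have eq: "(\<lambda>x. indicator S x *\<^sub>R (K x / pc * w x)) = (\<lambda>x. ((indicator S x * w x) * K x) / pc)"
    by (auto simp: indicator_def)
  have "AE x in M. x \<in> S \<longrightarrow> 0 \<le> K x / pc * w x"
    using AE
  proof eventually_elim
    fix x assume x: "x \<in> S \<longrightarrow> 0 < w x"
    have k: "0 \<le> K x / pc" using K[of x] pc by simp
    show "x \<in> S \<longrightarrow> 0 \<le> K x / pc * w x"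
    proof
      assume "x \<in> S"
      then have "0 < w x" using x by simp
      then show "0 \<le> K x / pc * w x" by (rule mult_nonneg_nonneg[OF k less_imp_le])
    qed
  qed
  moreover have "set_integrable M S (\<lambda>x. K x / pc * w x)"
    unfolding set_integrable_def eq using I by simp
  moreover have "(LINT x:S|M. K x / pc * w x) = 1"
    unfolding set_lebesgue_integral_def eq using E pc by simp
  ultimately show ?thesis unfolding prob_density_on_def by blast
qed

lemma Sint_disc:
  fixes p :: "int \<Rightarrow> real" and a b :: ereal
  assumes S: "supp p = {x. a \<le> ereal (of_int x) \<and> ereal (of_int x) \<le> b}"
  shows "\<And>u v y. u \<in> supp p \<Longrightarrow> v \<in> supp p \<Longrightarrow> u \<le> y \<Longrightarrow> y \<le> v \<Longrightarrow> y \<in> supp p"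
    and "\<And>c t t'. c \<in> supp p \<Longrightarrow> c \<le> t \<Longrightarrow> t \<notin> supp p \<Longrightarrow> t \<le> t' \<Longrightarrow> t' \<notin> supp p"
    and "\<And>c t t'. c \<in> supp p \<Longrightarrow> t \<le> c \<Longrightarrow> t \<notin> supp p \<Longrightarrow> t' \<le> t \<Longrightarrow> t' \<notin> supp p"
proof -
  have mono: "\<And>x y::int. x \<le> y \<Longrightarrow> ereal (of_int x) \<le> ereal (of_int y)" by simp
  show "\<And>u v y. u \<in> supp p \<Longrightarrow> v \<in> supp p \<Longrightarrow> u \<le> y \<Longrightarrow> y \<le> v \<Longrightarrow> y \<in> supp p"
    unfolding S using mono by (blast intro: order_trans)
  show "\<And>c t t'. c \<in> supp p \<Longrightarrow> c \<le> t \<Longrightarrow> t \<notin> supp p \<Longrightarrow> t \<le> t' \<Longrightarrow> t' \<notin> supp p"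
    unfolding S using mono by (blast intro: order_trans)
  show "\<And>c t t'. c \<in> supp p \<Longrightarrow> t \<le> c \<Longrightarrow> t \<notin> supp p \<Longrightarrow> t' \<le> t \<Longrightarrow> t' \<notin> supp p"
    unfolding S using mono by (blast intro: order_trans)
qed




theorem proposition2p14:
  shows
  "(\<forall>(p::real \<Rightarrow> real) (g::real \<Rightarrow> real) (h::real \<Rightarrow> real) (x'::real).
      ((\<forall>x. 0 \<le> p x) \<and> integrable lborel p \<and> (LINT x|lborel. p x) = 1 \<and>
       (\<exists>a b::ereal. a < b \<and>
          interior (supp p) = {x. a < ereal x \<and> ereal x < b} \<and>
          closure (supp p) = {x. a \<le> ereal x \<and> ereal x \<le> b}) \<and>
       has_weak_deriv_on p g UNIV \<and>
       set_integrable lborel (supp p) g \<and> (LINT x:supp p|lborel. g x) = 0 \<and>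
       has_weak_deriv_on (\<lambda>x. if x \<in> supp p then g x / p x else 0) h (interior (supp p)) \<and>
       (AE x in lborel. x \<in> supp p \<longrightarrow> - h x > 0) \<and>
       set_integrable lborel (supp p) h \<and>
       x' \<in> supp p)
      \<longrightarrow> prob_density_on lborel (supp p)
            (\<lambda>x. covK lborel p 0 x x' / p x' * (- h x)))
   \<and>
   (\<forall>(l::int) (p::int \<Rightarrow> real) (x'::int).
      (l \<in> {-1, 1} \<and>
       (\<forall>x. 0 \<le> p x) \<and> integrable (count_space UNIV) p \<and>
       (LINT x|count_space UNIV. p x) = 1 \<and>
       (\<exists>a b::ereal. a < b \<and>
          a \<in> {-\<infinity>, \<infinity>} \<union> range (\<lambda>k::int. ereal (of_int k)) \<and>
          b \<in> {-\<infinity>, \<infinity>} \<union> range (\<lambda>k::int. ereal (of_int k)) \<and>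
          supp p = {x. a \<le> ereal (of_int x) \<and> ereal (of_int x) \<le> b}) \<and>
       set_integrable (count_space UNIV) (supp p) (delta l p) \<and>
       (LINT x:supp p|count_space UNIV. delta l p x) = 0 \<and>
       (AE x in count_space UNIV. x \<in> supp p \<longrightarrow>
          - delta (-l) (\<lambda>y. if y \<in> supp p then delta l p y / p y else 0) x > 0) \<and>
       integrable (count_space UNIV)
          (delta (-l) (\<lambda>y. if y \<in> supp p then delta l p y / p y else 0)) \<and>
       x' \<in> supp p)
      \<longrightarrow> prob_density_on (count_space UNIV) (supp p)
            (\<lambda>x. covK (count_space UNIV) p (if l = 1 then 1 else 0) x x' / p x'
                 * (- delta (-l) (\<lambda>y. if y \<in> supp p then delta l p y / p y else 0) x)))"
proof (intro conjI allI impI)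
  fix p g h :: "real \<Rightarrow> real" and x' :: real
  assume H: "(\<forall>x. 0 \<le> p x) \<and> integrable lborel p \<and> (LINT x|lborel. p x) = 1 \<and>
       (\<exists>a b::ereal. a < b \<and>
          interior (supp p) = {x. a < ereal x \<and> ereal x < b} \<and>
          closure (supp p) = {x. a \<le> ereal x \<and> ereal x \<le> b}) \<and>
       has_weak_deriv_on p g UNIV \<and>
       set_integrable lborel (supp p) g \<and> (LINT x:supp p|lborel. g x) = 0 \<and>
       has_weak_deriv_on (\<lambda>x. if x \<in> supp p then g x / p x else 0) h (interior (supp p)) \<and>
       (AE x in lborel. x \<in> supp p \<longrightarrow> - h x > 0) \<and>
       set_integrable lborel (supp p) h \<and>
       x' \<in> supp p"
  then have p0: "\<And>x. 0 \<le> p x" and pint: "integrable lborel p" and p1: "(LINT x|lborel. p x) = 1"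
    and hp: "has_weak_deriv_on p g UNIV"
    and gint: "set_integrable lborel (supp p) g" and gsum: "(LINT x:supp p|lborel. g x) = 0"
    and hr: "has_weak_deriv_on (\<lambda>x. if x \<in> supp p then g x / p x else 0) h (interior (supp p))"
    and AEh: "AE x in lborel. x \<in> supp p \<longrightarrow> 0 < - h x"
    and hint: "set_integrable lborel (supp p) h" and c: "x' \<in> supp p"
    by auto
  from H obtain a b :: ereal where intS: "interior (supp p) = {x. a < ereal x \<and> ereal x < b}" by blast
  note CM = cont_main[OF p0 pint p1 intS hp gint gsum hr hint c]
  have pc: "0 < p x'" using c by (simp add: supp_def)
  show "prob_density_on lborel (supp p) (\<lambda>x. covK lborel p 0 x x' / p x' * (- h x))"
    by (rule pd_assemble[OF CM pc covK_nonneg[OF pint p0 p1 chi0_meas] AEh])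
next
  fix l :: int and p :: "int \<Rightarrow> real" and x' :: int
  assume H: "l \<in> {-1, 1} \<and>
       (\<forall>x. 0 \<le> p x) \<and> integrable (count_space UNIV) p \<and>
       (LINT x|count_space UNIV. p x) = 1 \<and>
       (\<exists>a b::ereal. a < b \<and>
          a \<in> {-\<infinity>, \<infinity>} \<union> range (\<lambda>k::int. ereal (of_int k)) \<and>
          b \<in> {-\<infinity>, \<infinity>} \<union> range (\<lambda>k::int. ereal (of_int k)) \<and>
          supp p = {x. a \<le> ereal (of_int x) \<and> ereal (of_int x) \<le> b}) \<and>
       set_integrable (count_space UNIV) (supp p) (delta l p) \<and>
       (LINT x:supp p|count_space UNIV. delta l p x) = 0 \<and>
       (AE x in count_space UNIV. x \<in> supp p \<longrightarrow>
          - delta (-l) (\<lambda>y. if y \<in> supp p then delta l p y / p y else 0) x > 0) \<and>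
       integrable (count_space UNIV)
          (delta (-l) (\<lambda>y. if y \<in> supp p then delta l p y / p y else 0)) \<and>
       x' \<in> supp p"
  then have l: "l = -1 \<or> l = 1" and p0: "\<And>x. 0 \<le> p x" and pint: "integrable CS p" and p1: "(LINT x|CS. p x) = 1"
    and dint: "set_integrable CS (supp p) (delta l p)"
    and dsum: "(LINT x:supp p|CS. delta l p x) = 0"
    and AEw: "AE x in CS. x \<in> supp p \<longrightarrow> 0 < - delta (-l) (\<lambda>y. if y \<in> supp p then delta l p y / p y else 0) x"
    and wint: "integrable CS (delta (-l) (\<lambda>y. if y \<in> supp p then delta l p y / p y else 0))"
    and c: "x' \<in> supp p"
    by auto
  from H obtain a b :: ereal where S: "supp p = {x. a \<le> ereal (of_int x) \<and> ereal (of_int x) \<le> b}" by blast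
  note SS = Sint_disc[OF S]
  have Si: "\<forall>u v y. u \<in> supp p \<longrightarrow> v \<in> supp p \<longrightarrow> u \<le> y \<longrightarrow> y \<le> v \<longrightarrow> y \<in> supp p"
    using SS(1) by blast
  have pc: "0 < p x'" using c by (simp add: supp_def)
  have ch: "\<And>a y. (\<lambda>t. chi (a::int) t y) \<in> borel_measurable CS" by simp
  from l show "prob_density_on (count_space UNIV) (supp p)
            (\<lambda>x. covK (count_space UNIV) p (if l = 1 then 1 else 0) x x' / p x'
                 * (- delta (-l) (\<lambda>y. if y \<in> supp p then delta l p y / p y else 0) x))"
  proof
    assume l1: "l = -1"
    have St: "\<forall>t t'. t \<le> x' \<longrightarrow> t \<notin> supp p \<longrightarrow> t' \<le> t \<longrightarrow> t' \<notin> supp p"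
      using SS(3)[OF c] by blast
    note DM = disc_lm1[OF p0 pint p1 Si St dint[unfolded l1] dsum[unfolded l1] wint[unfolded l1, simplified] c]
    have X: "prob_density_on CS (supp p) (\<lambda>x. covK CS p 0 x x' / p x' * (- delta 1 (\<lambda>y. if y \<in> supp p then delta (-1) p y / p y else 0) x))"
      by (rule pd_assemble[OF DM pc covK_nonneg[OF pint p0 p1 ch]]) (use AEw[unfolded l1] in simp)
    show ?thesis using X unfolding l1 by simp
  next
    assume l1: "l = 1"
    have St: "\<forall>t t'. x' \<le> t \<longrightarrow> t \<notin> supp p \<longrightarrow> t \<le> t' \<longrightarrow> t' \<notin> supp p"
      using SS(2)[OF c] by blast
    note DM = disc_l1[OF p0 pint p1 Si St dint[unfolded l1] dsum[unfolded l1] wint[unfolded l1] c]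
    have X: "prob_density_on CS (supp p) (\<lambda>x. covK CS p 1 x x' / p x' * (- delta (-1) (\<lambda>y. if y \<in> supp p then delta 1 p y / p y else 0) x))"
      by (rule pd_assemble[OF DM pc covK_nonneg[OF pint p0 p1 ch]]) (use AEw[unfolded l1] in simp)
    show ?thesis using X unfolding l1 by simp
  qed
qed


end
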